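(* If $V\subset\mathcal{A}_0$ is compact, then $(\mathrm{bor}(V))^*=V^*$.
   Context: $D=\{z:|z|<1\}$, $\overline D$ its closure. $\mathcal{A}$ is the space of functions $f(z)=\sum_{k\ge0}a_k(f)z^k$ analytic in $D$, with the topology of locally uniform convergence; $\mathcal{A}_0=\{f\in\mathcal{A}: a_0(f)=1\}$. The Hadamard product is $(f*g)(z)=\sum_{k\ge0}a_k(f)a_k(g)z^k$. For $W\subset\mathcal{A}_0$, $W^*=\{g\in\mathcal{A}_0:(f*g)(z)\ne0 \ \forall z\in D,\ \forall f\in W\}$. For $x\in\overline D$, $(P_xf)(z)=f(xz)$. Let $e\equiv1$. If $V\ne\{e\}$, an element $f\in V$ is a border element of $V$ if whenever $f=P_xg$ with $g\in V$, $x\in\overline D$, then $|x|=1$; $\mathrm{bor}(V)$ is the set of border elements. If $V=\{e\}$, $\mathrm{bor}(V)=\{e\}$. *)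

theory Defs
  imports "HOL-Analysis.Analysis"
begin

abbreviation unit_disc :: "complex set" where "unit_disc \<equiv> ball 0 1"

text \<open>The space A of analytic functions on D. Functions are represented extensionally:
  holomorphic on D and equal to 0 outside D, so that equality of elements of A is
  equality as functions on D.\<close>
definition anA :: "(complex \<Rightarrow> complex) set" where
  "anA = {f. f holomorphic_on unit_disc \<and> (\<forall>z. z \<notin> unit_disc \<longrightarrow> f z = 0)}"

definition coeff_a :: "nat \<Rightarrow> (complex \<Rightarrow> complex) \<Rightarrow> complex" where
  "coeff_a k f = (deriv ^^ k) f 0 / fact k"

definition anA0 :: "(complex \<Rightarrow> complex) set" where
  "anA0 = {f \<in> anA. coeff_a 0 f = 1}"

text \<open>Topology of locally uniform convergence on A.\<close>
definition lu_top :: "(complex \<Rightarrow> complex) topology" where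
  "lu_top = topology (\<lambda>U. U \<subseteq> anA \<and>
     (\<forall>f\<in>U. \<exists>K e. compact K \<and> K \<subseteq> unit_disc \<and> e > 0 \<and>
        {g \<in> anA. \<forall>z\<in>K. cmod (g z - f z) < e} \<subseteq> U))"

definition hadamard :: "(complex \<Rightarrow> complex) \<Rightarrow> (complex \<Rightarrow> complex) \<Rightarrow> complex \<Rightarrow> complex" where
  "hadamard f g = (\<lambda>z. if z \<in> unit_disc then (\<Sum>k. coeff_a k f * coeff_a k g * z ^ k) else 0)"

definition dual :: "(complex \<Rightarrow> complex) set \<Rightarrow> (complex \<Rightarrow> complex) set" where
  "dual W = {g \<in> anA0. \<forall>f\<in>W. \<forall>z\<in>unit_disc. hadamard f g z \<noteq> 0}"

definition Pop :: "complex \<Rightarrow> (complex \<Rightarrow> complex) \<Rightarrow> complex \<Rightarrow> complex" where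
  "Pop x f = (\<lambda>z. if z \<in> unit_disc then f (x * z) else 0)"

definition e_one :: "complex \<Rightarrow> complex" where
  "e_one = (\<lambda>z. if z \<in> unit_disc then 1 else 0)"

definition bor :: "(complex \<Rightarrow> complex) set \<Rightarrow> (complex \<Rightarrow> complex) set" where
  "bor V = (if V = {e_one} then {e_one}
            else {f \<in> V. \<forall>g\<in>V. \<forall>x\<in>cball 0 1. f = Pop x g \<longrightarrow> cmod x = 1})"

end

theory Submission imports Defs "HOL-Complex_Analysis.Complex_Analysis" begin

definition luP :: "(complex \<Rightarrow> complex) set \<Rightarrow> bool" where
 "luP = (\<lambda>U. U \<subseteq> anA \<and>
     (\<forall>f\<in>U. \<exists>K e. compact K \<and> K \<subseteq> unit_disc \<and> e > 0 \<and>
        {g \<in> anA. \<forall>z\<in>K. cmod (g z - f z) < e} \<subseteq> U))"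

lemma istop_lu: "istopology luP"
  unfolding istopology_def
proof (intro conjI allI impI)
  fix S T assume S: "luP S" and T: "luP T"
  show "luP (S \<inter> T)" unfolding luP_def
  proof (intro conjI ballI)
    show "S \<inter> T \<subseteq> anA" using S unfolding luP_def by blast
    fix f assume f: "f \<in> S \<inter> T"
    obtain K1 e1 where 1: "compact K1" "K1 \<subseteq> unit_disc" "e1 > 0"
      "{g \<in> anA. \<forall>z\<in>K1. cmod (g z - f z) < e1} \<subseteq> S" using S f unfolding luP_def by blast
    obtain K2 e2 where 2: "compact K2" "K2 \<subseteq> unit_disc" "e2 > 0"
      "{g \<in> anA. \<forall>z\<in>K2. cmod (g z - f z) < e2} \<subseteq> T" using T f unfolding luP_def by blast
    show "\<exists>K e. compact K \<and> K \<subseteq> unit_disc \<and> e > 0 \<and>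
        {g \<in> anA. \<forall>z\<in>K. cmod (g z - f z) < e} \<subseteq> S \<inter> T"
    proof (intro exI conjI)
      show "compact (K1 \<union> K2)" using 1 2 by blast
      show "K1 \<union> K2 \<subseteq> unit_disc" using 1 2 by blast
      show "min e1 e2 > 0" using 1 2 by simp
      show "{g \<in> anA. \<forall>z\<in>K1 \<union> K2. cmod (g z - f z) < min e1 e2} \<subseteq> S \<inter> T"
        using 1(4) 2(4) by auto
    qed
  qed
next
  fix KK assume H: "\<forall>K\<in>KK. luP K"
  show "luP (\<Union>KK)" unfolding luP_def
  proof (intro conjI ballI)
    show "\<Union>KK \<subseteq> anA" using H unfolding luP_def by blast
    fix f assume "f \<in> \<Union>KK"
    then obtain S where S: "S \<in> KK" "f \<in> S" by blast
    have "luP S" using H S(1) by blast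
    then obtain K e where "compact K" "K \<subseteq> unit_disc" "e > 0"
      "{g \<in> anA. \<forall>z\<in>K. cmod (g z - f z) < e} \<subseteq> S" using S(2) unfolding luP_def by blast
    then show "\<exists>K e. compact K \<and> K \<subseteq> unit_disc \<and> e > 0 \<and>
        {g \<in> anA. \<forall>z\<in>K. cmod (g z - f z) < e} \<subseteq> \<Union>KK" using S by blast
  qed
qed

lemma openin_lu: "openin lu_top = luP"
  unfolding lu_top_def luP_def[symmetric] using istop_lu by simp

lemma topspace_lu: "topspace lu_top = anA"
proof -
  have "luP anA" unfolding luP_def
    by (intro conjI ballI subset_refl exI[of _ "{}"] exI[of _ "1::real"]) auto
  then show ?thesis unfolding topspace_def openin_lu luP_def by blast
qed

lemma basic_open:
  assumes "compact K" "K \<subseteq> unit_disc" "e > 0" "h \<in> anA"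
  shows "openin lu_top {g \<in> anA. \<forall>w\<in>K. cmod (g w - h w) < e}"
  unfolding openin_lu luP_def
proof (intro conjI ballI)
  fix g0 assume g0: "g0 \<in> {g \<in> anA. \<forall>w\<in>K. cmod (g w - h w) < e}"
  show "\<exists>K' e'. compact K' \<and> K' \<subseteq> unit_disc \<and> e' > 0 \<and>
        {g \<in> anA. \<forall>z\<in>K'. cmod (g z - g0 z) < e'} \<subseteq> {g \<in> anA. \<forall>w\<in>K. cmod (g w - h w) < e}"
  proof (cases "K = {}")
    case True then show ?thesis
      by (intro exI[of _ "{}"] exI[of _ "1::real"]) auto
  next
    case False
    have "continuous_on K (\<lambda>w. cmod (g0 w - h w))"
    proof -
      have "continuous_on unit_disc (\<lambda>w. g0 w - h w)"
        using g0 assms(4) unfolding anA_def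
        by (intro holomorphic_on_imp_continuous_on holomorphic_intros) auto
      from continuous_on_norm[OF continuous_on_subset[OF this assms(2)]] show ?thesis .
    qed
    then obtain w0 where w0: "w0 \<in> K" "\<And>w. w \<in> K \<Longrightarrow> cmod (g0 w - h w) \<le> cmod (g0 w0 - h w0)"
      using continuous_attains_sup[OF assms(1) False] by blast
    define M where "M = cmod (g0 w0 - h w0)"
    have "M < e" using g0 w0 unfolding M_def by auto
    show ?thesis
    proof (intro exI conjI)
      show "compact K" "K \<subseteq> unit_disc" by fact+
      show "e - M > 0" using \<open>M < e\<close> by simp
      show "{g \<in> anA. \<forall>z\<in>K. cmod (g z - g0 z) < e - M} \<subseteq> {g \<in> anA. \<forall>w\<in>K. cmod (g w - h w) < e}"
      proof safe
        fix g w assume g: "g \<in> anA" "\<forall>z\<in>K. cmod (g z - g0 z) < e - M" and w: "w \<in> K"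
        have "cmod (g w - h w) \<le> cmod (g w - g0 w) + cmod (g0 w - h w)"
          using norm_triangle_ineq[of "g w - g0 w" "g0 w - h w"] by simp
        also have "\<dots> < e" using g w w0(2)[OF w] unfolding M_def by fastforce
        finally show "cmod (g w - h w) < e" .
      qed
    qed
  qed
qed auto

lemma mult_disc: "cmod x \<le> 1 \<Longrightarrow> z \<in> unit_disc \<Longrightarrow> x * z \<in> unit_disc"
proof -
  assume a: "cmod x \<le> 1" "z \<in> unit_disc"
  have "cmod x * cmod z \<le> 1 * cmod z" by (rule mult_right_mono) (use a in auto)
  then show ?thesis using a by (simp add: norm_mult)
qed

lemma Pop_eq_iff: "f \<in> anA \<Longrightarrow> f = Pop x h \<longleftrightarrow> (\<forall>z\<in>unit_disc. h (x*z) = f z)"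
  unfolding anA_def Pop_def fun_eq_iff by auto

lemma Pop_1: "f \<in> anA \<Longrightarrow> Pop 1 f = f"
  unfolding anA_def Pop_def fun_eq_iff by auto

lemma Pop_Pop: "cmod x \<le> 1 \<Longrightarrow> Pop x (Pop y k) = Pop (x*y) k"
proof -
  assume x: "cmod x \<le> 1"
  show ?thesis unfolding Pop_def fun_eq_iff
  proof
    fix z show "(if z \<in> unit_disc then (if x * z \<in> unit_disc then k (y * (x * z)) else 0) else 0) =
      (if z \<in> unit_disc then k (x * y * z) else 0)"
      using mult_disc[OF x, of z] by (simp add: mult_ac)
  qed
qed

lemma coeff0: "coeff_a 0 h = h 0"
  unfolding coeff_a_def by simp

lemma Pop_0: "coeff_a 0 h = 1 \<Longrightarrow> Pop 0 h = e_one"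
  unfolding Pop_def e_one_def fun_eq_iff coeff0 by auto

lemma deriv_Pop:
  assumes h: "h \<in> anA" and x: "cmod x \<le> 1"
  shows "\<forall>w\<in>unit_disc. (deriv^^k) (Pop x h) w = x^k * (deriv^^k) h (x*w)"
proof (induction k)
  case 0
  then show ?case unfolding Pop_def by simp
next
  case (Suc k)
  show ?case
  proof
    fix w :: complex assume w: "w \<in> unit_disc"
    have hol: "(deriv^^k) h holomorphic_on unit_disc"
      using h unfolding anA_def by (intro holomorphic_higher_deriv) auto
    have xw: "x * w \<in> unit_disc" using mult_disc[OF x w] .
    have ev: "eventually (\<lambda>y. (deriv^^k) (Pop x h) y = x^k * (deriv^^k) h (x*y)) (nhds w)"
      using eventually_nhds_in_open[OF open_ball w] Suc.IH by (auto elim: eventually_mono)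
    have d1: "((deriv^^k) h has_field_derivative deriv ((deriv^^k) h) (x*w)) (at (x*w))"
      by (rule holomorphic_derivI[OF hol open_ball xw])
    have d2: "((\<lambda>y. x * y) has_field_derivative x) (at w)"
      using DERIV_cmult_Id by blast
    have d3: "((\<lambda>y. (deriv^^k) h (x*y)) has_field_derivative deriv ((deriv^^k) h) (x*w) * x) (at w)"
      using DERIV_chain2[OF d1 d2] .
    have d4: "((\<lambda>y. x^k * (deriv^^k) h (x*y)) has_field_derivative x^k * (deriv ((deriv^^k) h) (x*w) * x)) (at w)"
      using DERIV_cmult[OF d3] .
    have "(deriv^^Suc k) (Pop x h) w = deriv ((deriv^^k) (Pop x h)) w" by simp
    also have "\<dots> = deriv (\<lambda>y. x^k * (deriv^^k) h (x*y)) w"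
      by (rule deriv_cong_ev[OF ev refl])
    also have "\<dots> = x^k * (deriv ((deriv^^k) h) (x*w) * x)"
      by (rule DERIV_imp_deriv[OF d4])
    also have "\<dots> = x^Suc k * (deriv^^Suc k) h (x*w)" by (simp add: mult_ac)
    finally show "(deriv^^Suc k) (Pop x h) w = x^Suc k * (deriv^^Suc k) h (x*w)" .
  qed
qed

lemma coeff_Pop:
  assumes "h \<in> anA" "cmod x \<le> 1"
  shows "coeff_a k (Pop x h) = x^k * coeff_a k h"
  using deriv_Pop[OF assms, of k] unfolding coeff_a_def by simp

lemma had_Pop:
  assumes "h \<in> anA" "cmod x \<le> 1" "z \<in> unit_disc"
  shows "hadamard (Pop x h) g z = hadamard h g (x*z)"
  unfolding hadamard_def using assms mult_disc[OF assms(2,3)]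
  by (simp add: coeff_Pop power_mult_distrib mult_ac)

lemma had_self0:
  assumes "coeff_a 0 g = 1"
  shows "hadamard g g 0 = 1"
proof -
  have "(\<lambda>k. coeff_a k g * coeff_a k g * 0 ^ k) = (\<lambda>k. if k = 0 then coeff_a k g * coeff_a k g else 0)"
    by (auto simp: fun_eq_iff)
  then have "(\<lambda>k. coeff_a k g * coeff_a k g * (0::complex) ^ k) sums 1"
    using sums_single[of 0 "\<lambda>k. coeff_a k g * coeff_a k g"] assms by simp
  then show ?thesis unfolding hadamard_def by (simp add: sums_iff)
qed

lemma ev_cont:
  assumes z: "z \<in> unit_disc"
  shows "continuous_map (prod_topology lu_top (top_of_set (cball 0 1))) euclidean (\<lambda>p. fst p (snd p * z))"
  unfolding continuous_map_eq_topcontinuous_at topcontinuous_at_def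
proof (intro ballI conjI allI impI)
  fix p assume p: "p \<in> topspace (prod_topology lu_top (top_of_set (cball (0::complex) 1)))"
  then show "p \<in> topspace (prod_topology lu_top (top_of_set (cball (0::complex) 1)))" .
  show "(\<lambda>p. fst p (snd p * z)) \<in> topspace (prod_topology lu_top (top_of_set (cball 0 1))) \<rightarrow> topspace euclidean"
    by simp
  obtain h x where hx: "p = (h, x)" by (cases p)
  have h: "h \<in> anA" and x: "cmod x \<le> 1" using p hx by (auto simp: topspace_lu)
  fix V assume V: "openin euclidean V \<and> fst p (snd p * z) \<in> V"
  define w0 where "w0 = x * z"
  have w0: "w0 \<in> unit_disc" unfolding w0_def using mult_disc[OF x z] .
  obtain \<epsilon> where eps: "\<epsilon> > 0" "ball (h w0) \<epsilon> \<subseteq> V"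
    using V hx unfolding w0_def by (auto simp: open_contains_ball)
  have "continuous_on unit_disc h" using h unfolding anA_def
    by (auto intro: holomorphic_on_imp_continuous_on)
  then obtain \<delta> where d: "\<delta> > 0" "\<And>w. w \<in> unit_disc \<Longrightarrow> dist w w0 < \<delta> \<Longrightarrow> dist (h w) (h w0) < \<epsilon>/2"
    unfolding continuous_on_iff using w0 eps(1) by (metis half_gt_zero)
  obtain \<rho>0 where r0: "\<rho>0 > 0" "ball w0 \<rho>0 \<subseteq> unit_disc"
    using w0 open_contains_ball[of unit_disc] by blast
  define \<rho> where "\<rho> = min \<delta> \<rho>0 / 2"
  have rho: "\<rho> > 0" "\<rho> < \<delta>" "\<rho> < \<rho>0" using d(1) r0(1) unfolding \<rho>_def by auto
  define K where "K = cball w0 \<rho>"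
  have K: "compact K" "K \<subseteq> unit_disc" unfolding K_def using rho r0 by auto
  define N where "N = {g \<in> anA. \<forall>w\<in>K. cmod (g w - h w) < \<epsilon>/2}"
  define Y0 where "Y0 = ball x (\<rho> / (cmod z + 1)) \<inter> cball 0 1"
  show "\<exists>U. openin (prod_topology lu_top (top_of_set (cball 0 1))) U \<and> p \<in> U \<and>
          (\<forall>y\<in>U. fst y (snd y * z) \<in> V)"
  proof (intro exI conjI ballI)
    have "openin lu_top N" unfolding N_def using basic_open[OF K _ h, of "\<epsilon>/2"] eps(1) by linarith
    moreover have "openin (top_of_set (cball 0 1)) Y0" unfolding Y0_def
      by (auto simp: openin_subtopology intro!: exI[of _ "ball x (\<rho> / (cmod z + 1))"])
    ultimately show "openin (prod_topology lu_top (top_of_set (cball 0 1))) (N \<times> Y0)"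
      by (simp add: openin_prod_Times_iff)
    have "0 < \<rho> / (cmod z + 1)" using rho(1) by (intro divide_pos_pos) (auto simp: add_nonneg_pos)
    then have "x \<in> Y0" unfolding Y0_def using x by simp
    moreover have "h \<in> N" unfolding N_def using h eps(1) by simp
    ultimately show "p \<in> N \<times> Y0" using hx by simp
    fix q assume q: "q \<in> N \<times> Y0"
    obtain g y where gy: "q = (g, y)" by (cases q)
    have g: "g \<in> N" and y: "y \<in> Y0" using q gy by auto
    have "cmod (y*z - w0) = cmod (y - x) * cmod z" unfolding w0_def
      by (metis left_diff_distrib norm_mult)
    also have "\<dots> \<le> (\<rho> / (cmod z + 1)) * cmod z"
      using y unfolding Y0_def by (intro mult_right_mono) (auto simp: dist_norm norm_minus_commute)
    also have "\<dots> \<le> \<rho>"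
    proof -
      have pz: "0 < 1 + cmod z" by (simp add: add_pos_nonneg)
      have "\<rho> * cmod z \<le> \<rho> * (1 + cmod z)" using rho(1) by simp
      then show ?thesis using pz by (simp add: field_simps)
    qed
    finally have yz: "cmod (y*z - w0) \<le> \<rho>" .
    have yzK: "y * z \<in> K" unfolding K_def using yz by (simp add: dist_norm norm_minus_commute)
    have "cmod (g (y*z) - h w0) \<le> cmod (g (y*z) - h (y*z)) + cmod (h (y*z) - h w0)"
      using norm_triangle_ineq[of "g (y*z) - h (y*z)" "h (y*z) - h w0"] by simp
    also have "\<dots> < \<epsilon>/2 + \<epsilon>/2"
    proof (rule add_strict_mono)
      show "cmod (g (y*z) - h (y*z)) < \<epsilon>/2" using g yzK unfolding N_def by blast
      show "cmod (h (y*z) - h w0) < \<epsilon>/2" using d(2)[of "y*z"] yzK K(2) yz rho(2)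
        by (auto simp: dist_norm)
    qed
    finally have "g (y*z) \<in> ball (h w0) \<epsilon>" by (simp add: dist_norm norm_minus_commute)
    then show "fst q (snd q * z) \<in> V" using eps(2) gy by auto
  qed
qed

lemma exists_border:
  assumes V: "V \<subseteq> anA0" "compactin lu_top V" and f: "f \<in> V" "f \<noteq> e_one"
  shows "\<exists>h\<in>bor V. \<exists>x. cmod x \<le> 1 \<and> f = Pop x h"
proof -
  define X where "X = prod_topology lu_top (top_of_set (cball (0::complex) 1))"
  have VA: "V \<subseteq> anA" using V(1) unfolding anA0_def by auto
  have fA: "f \<in> anA" using f VA by auto
  define E where "E = (\<lambda>z. {p \<in> topspace X. fst p (snd p * z) \<in> {f z}})"
  have cE: "closedin X (\<Inter>(E ` unit_disc))"
  proof (rule closedin_Inter)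
    show "E ` unit_disc \<noteq> {}" by auto
    fix S assume "S \<in> E ` unit_disc"
    then obtain z where z: "z \<in> unit_disc" "S = E z" by auto
    have "closedin euclidean {f z}" by (simp add: closed_closedin[symmetric])
    from closedin_continuous_map_preimage[OF ev_cont[OF z(1)] this]
    show "closedin X S" unfolding z(2) E_def X_def .
  qed
  have cV: "compactin X (V \<times> cball 0 1)" unfolding X_def using V(2) f(1)
    by (auto simp: compactin_Times compactin_subtopology)
  define Q where "Q = \<Inter>(E ` unit_disc) \<inter> (V \<times> cball 0 1)"
  have cQ: "compactin X Q" unfolding Q_def by (rule closed_Int_compactin[OF cE cV])
  have memQ: "\<And>h x. (h,x) \<in> Q \<longleftrightarrow> h \<in> V \<and> cmod x \<le> 1 \<and> f = Pop x h"
    unfolding Q_def E_def X_def using VA by (auto simp: topspace_lu Pop_eq_iff[OF fA])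
  have f1: "(f,1) \<in> Q" using memQ f(1) Pop_1[OF fA] by simp
  have "continuous_map (top_of_set (cball (0::complex) 1)) euclideanreal norm"
    by (simp add: continuous_on_norm_id)
  then have cont: "continuous_map X euclideanreal (norm \<circ> snd)"
    unfolding X_def by (rule continuous_map_compose[OF continuous_map_snd])
  have "compact ((norm \<circ> snd) ` Q)" using image_compactin[OF cQ cont] by simp
  moreover have "(norm \<circ> snd) ` Q \<noteq> {}" using f1 by auto
  ultimately obtain r where r: "r \<in> (norm \<circ> snd) ` Q" "\<And>t. t \<in> (norm \<circ> snd) ` Q \<Longrightarrow> r \<le> t"
    using compact_attains_inf by metis
  then obtain h x0 where hx0: "(h, x0) \<in> Q" "r = cmod x0" by auto
  have h: "h \<in> V" and x0: "cmod x0 \<le> 1" and fh: "f = Pop x0 h" using hx0 memQ by auto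
  have mini: "\<And>k y. k \<in> V \<Longrightarrow> cmod y \<le> 1 \<Longrightarrow> f = Pop y k \<Longrightarrow> cmod x0 \<le> cmod y"
  proof -
    fix k y assume "k \<in> V" "cmod y \<le> 1" "f = Pop y k"
    then have "(k, y) \<in> Q" using memQ by simp
    then show "cmod x0 \<le> cmod y" using r(2)[of "cmod y"] hx0(2) by force
  qed
  have "x0 \<noteq> 0"
  proof
    assume "x0 = 0"
    have "coeff_a 0 h = 1" using h V(1) unfolding anA0_def by auto
    then have "f = e_one" using fh \<open>x0 = 0\<close> Pop_0 by simp
    then show False using f(2) by simp
  qed
  have "V \<noteq> {e_one}" using f by auto
  have "h \<in> bor V" unfolding bor_def using \<open>V \<noteq> {e_one}\<close>
  proof (simp add: h, intro ballI impI)
    fix k y assume k: "k \<in> V" and y: "y \<in> cball (0::complex) 1" and hk: "h = Pop y k"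
    have yy: "cmod y \<le> 1" using y by simp
    have "f = Pop (x0 * y) k" using fh hk Pop_Pop[OF x0] by simp
    moreover have "cmod (x0 * y) \<le> 1" using x0 yy by (simp add: norm_mult mult_le_one)
    ultimately have "cmod x0 \<le> cmod (x0 * y)" using mini[OF k] by blast
    then have "cmod x0 \<le> cmod x0 * cmod y" by (simp add: norm_mult)
    moreover have "cmod x0 > 0" using \<open>x0 \<noteq> 0\<close> by simp
    ultimately have "1 \<le> cmod y" by simp
    then show "cmod y = 1" using yy by simp
  qed
  then show ?thesis using x0 fh by blast
qed

theorem corollary3:
  assumes "V \<subseteq> anA0" and "compactin lu_top V"
  shows "dual (bor V) = dual V"
proof
  have bsub: "bor V \<subseteq> V" unfolding bor_def by auto
  then show "dual V \<subseteq> dual (bor V)" unfolding dual_def by auto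
  show "dual (bor V) \<subseteq> dual V"
  proof
    fix g assume g: "g \<in> dual (bor V)"
    have g0: "g \<in> anA0" and gb: "\<And>b z. b \<in> bor V \<Longrightarrow> z \<in> unit_disc \<Longrightarrow> hadamard b g z \<noteq> 0"
      using g unfolding dual_def by auto
    have gA: "g \<in> anA" and gc: "coeff_a 0 g = 1" using g0 unfolding anA0_def by auto
    have "\<forall>f\<in>V. \<forall>z\<in>unit_disc. hadamard f g z \<noteq> 0"
    proof (intro ballI)
      fix f z assume f: "f \<in> V" and z: "z \<in> unit_disc"
      show "hadamard f g z \<noteq> 0"
      proof (cases "f = e_one")
        case True
        have "hadamard f g z = hadamard (Pop 0 g) g z" using True Pop_0[OF gc] by simp
        also have "\<dots> = hadamard g g 0" using had_Pop[OF gA _ z, of 0] by simp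
        also have "\<dots> = 1" using had_self0[OF gc] .
        finally show ?thesis by simp
      next
        case False
        obtain h x where h: "h \<in> bor V" and x: "cmod x \<le> 1" and fh: "f = Pop x h"
          using exists_border[OF assms f False] by blast
        have hA: "h \<in> anA" using h bsub assms(1) unfolding anA0_def by auto
        have "hadamard f g z = hadamard h g (x*z)" using fh had_Pop[OF hA x z] by simp
        then show ?thesis using gb[OF h mult_disc[OF x z]] by simp
      qed
    qed
    then show "g \<in> dual V" using g0 unfolding dual_def by simp
  qed
qed

end
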